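(* Let $p$ be a prime and let $G$ be a finite $p$-group. Let $x\in G$ with $o(x)=p$, and let $\Upsilon$ be the connected component of the cyclic graph $\Delta(G)$ containing $x$. Then $x\sim y$ (i.e. $\langle x,y\rangle$ is cyclic) for every $y\in\Upsilon$ with $y\neq x$.
   Context: For a finite group $G$, the cyclic graph $\Delta(G)$ has vertex set $G^{\#}=G\setminus\{1\}$, and distinct vertices $x,y$ are adjacent (written $x\sim y$) if and only if the subgroup $\langle x,y\rangle$ is cyclic. $o(x)$ denotes the order of $x$. *)

theory Defs
  imports "HOL-Algebra.Algebra"
begin

definition cyc_adj :: "('a, 'b) monoid_scheme \<Rightarrow> 'a \<Rightarrow> 'a \<Rightarrow> bool" where
  "cyc_adj G x y \<longleftrightarrow>
     x \<in> carrier G - {\<one>\<^bsub>G\<^esub>} \<and> y \<in> carrier G - {\<one>\<^bsub>G\<^esub>} \<and> x \<noteq> y \<and>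
     cyclic_group (subgroup_generated G {x, y})"

definition cyc_component :: "('a, 'b) monoid_scheme \<Rightarrow> 'a \<Rightarrow> 'a set" where
  "cyc_component G x = {y. y \<in> carrier G - {\<one>\<^bsub>G\<^esub>} \<and> (cyc_adj G)\<^sup>*\<^sup>* x y}"

end

theory Submission imports Defs begin

lemma (in group) key:
  assumes g: "g \<in> carrier G" and m: "ord g dvd p ^ n" and p: "Factorial_Ring.prime p"
    and xp: "(g [^] (b::int)) [^] p = \<one>" and z: "g [^] (a::int) \<noteq> \<one>"
  shows "\<exists>j::int. g [^] b = (g [^] a) [^] j"
proof -
  obtain k where mk: "ord g = p ^ k" using m p divides_primepow_nat by blast
  have "(g [^] b) [^] (int p) = \<one>" using xp by (simp add: int_pow_int)
  hence mb: "int (ord g) dvd b * int p" using g by (simp add: int_pow_pow int_pow_eq_id)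
  have ma: "\<not> int (ord g) dvd a" using z g int_pow_eq_id by blast
  have k0: "k \<noteq> 0"
  proof
    assume "k = 0" then have "int (ord g) = 1" using mk by simp
    thus False using ma by simp
  qed
  define c where "c = gcd (int (ord g)) a"
  have c0: "c \<ge> 0" by (simp add: c_def)
  have "c dvd int (ord g)" by (simp add: c_def)
  hence "int (nat c) dvd int (p ^ k)" using mk c0 by simp
  hence "nat c dvd p ^ k" by (simp only: int_dvd_int_iff)
  then obtain i where i: "i \<le> k" "nat c = p ^ i" using p divides_primepow_nat by blast
  have "i \<noteq> k"
  proof
    assume "i = k"
    hence "int (nat c) = int (ord g)" using i mk by simp
    hence "c = int (ord g)" using c0 by simp
    thus False using ma unfolding c_def by (metis gcd_dvd2)
  qed
  hence "i \<le> k - 1" using i by simp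
  hence "p ^ i dvd p ^ (k - 1)" by (simp add: le_imp_power_dvd)
  hence "int (nat c) dvd int (p ^ (k - 1))" using i by (simp only: int_dvd_int_iff)
  hence "c dvd int (p ^ (k - 1))" using c0 by simp
  moreover have "int (p ^ (k - 1)) dvd b"
  proof -
    have "int (p ^ (k-1)) * int p dvd b * int p" using mb mk k0
      by (metis of_nat_mult power_minus_mult neq0_conv)
    thus ?thesis using p by (simp add: prime_gt_0_nat)
  qed
  ultimately have "c dvd b" by (rule dvd_trans)
  then obtain q where q: "b = c * q" by blast
  obtain u v where uv: "u * int (ord g) + v * a = c" using bezout_int c_def by metis
  have "g [^] b = g [^] (a * (v * q))"
    using g int_pow_eq[of g b "a * (v*q)"] q uv[symmetric]
    by (simp add: algebra_simps)
  thus ?thesis using g int_pow_pow by metis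
qed

lemma (in group) gen_single:
  assumes "y \<in> carrier G"
  shows "generate G {y} = range (\<lambda>n::int. y [^] n)"
  using carrier_subgroup_generated_by_singleton[OF assms] assms
  by (simp add: carrier_subgroup_generated)

lemma (in group) step_lemma:
  assumes fin: "finite (carrier G)" and pn: "order G = p ^ n" and p: "Factorial_Ring.prime p"
    and x: "x \<in> carrier G" "ord x = p"
    and y: "y \<in> carrier G" "x \<in> generate G {y}"
    and adj: "cyc_adj G y z"
  shows "z \<in> carrier G \<and> x \<in> generate G {z}"
proof -
  have z: "z \<in> carrier G" "z \<noteq> \<one>" using adj by (auto simp: cyc_adj_def)
  let ?H = "subgroup_generated G {y, z}"
  have cH: "carrier ?H = generate G {y, z}" using y z
    by (simp add: carrier_subgroup_generated insert_absorb Int_absorb1)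
  have "cyclic_group ?H" using adj by (simp add: cyc_adj_def)
  then obtain g where g: "g \<in> carrier ?H" "carrier ?H = range (\<lambda>n::int. g [^]\<^bsub>?H\<^esub> n)"
    using group.cyclic_group[OF group_subgroup_generated] by blast
  have gG: "g \<in> carrier G" using g(1) cH generate_in_carrier y z by blast
  have cH2: "carrier ?H = range (\<lambda>n::int. g [^] n)"
    using g int_pow_subgroup_generated[OF g(1)] by simp
  have "x \<in> generate G {y, z}" using y mono_generate[of "{y}" "{y,z}"] by blast
  then obtain b where b: "x = g [^] (b::int)" using cH cH2 by auto
  have "z \<in> generate G {y, z}" using generate.incl[of z "{y,z}"] by blast
  then obtain a where a: "z = g [^] (a::int)" using cH cH2 by auto
  have "ord g dvd p ^ n" using ord_dvd_group_order[OF gG] pn by simp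
  moreover have "(g [^] b) [^] p = \<one>" using b x pow_ord_eq_1 by metis
  ultimately obtain j where "g [^] b = (g [^] a) [^] (j::int)"
    using key[OF gG _ p] z a by blast
  hence "x \<in> range (\<lambda>n::int. z [^] n)" using a b by auto
  thus ?thesis using gen_single z by auto
qed

theorem lemma2p2:
  fixes G (structure) and p :: nat and x :: 'a
  assumes "group G" and "finite (carrier G)" and "Factorial_Ring.prime p"
    and "\<exists>n. order G = p ^ n"
    and "x \<in> carrier G" and "group.ord G x = p"
  shows "\<forall>y \<in> cyc_component G x. y \<noteq> x \<longrightarrow> cyc_adj G x y"
proof
  interpret group G by fact
  obtain n where n: "order G = p ^ n" using assms(4) by blast
  fix y assume yc: "y \<in> cyc_component G x"
  hence y1: "y \<in> carrier G" "y \<noteq> \<one>" and r: "(cyc_adj G)\<^sup>*\<^sup>* x y"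
    by (auto simp: cyc_component_def)
  have "y \<in> carrier G \<and> x \<in> generate G {y}" using r
  proof induction
    case base
    then show ?case using assms(5) generate.incl[of x "{x}"] by blast
  next
    case (step y z)
    then show ?case using step_lemma[OF assms(2) n assms(3) assms(5) assms(6)] by blast
  qed
  hence xy: "x \<in> generate G {y}" by blast
  have x1: "x \<noteq> \<one>" using assms(6) assms(3) ord_id by (metis not_prime_1)
  have "generate G {x, y} = generate G {y}"
  proof
    show "generate G {x, y} \<subseteq> generate G {y}"
      using xy generate_incl[of "{y}"] y1 generate_is_subgroup[of "{y}"]
      by (intro generate_subgroup_incl) (auto intro: generate.incl)
    show "generate G {y} \<subseteq> generate G {x, y}"
      using assms(5) y1 by (intro mono_generate) auto
  qed
  hence "subgroup_generated G {x, y} = subgroup_generated G {y}"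
    using assms(5) y1 by (simp add: subgroup_generated_def insert_absorb Int_absorb1)
  hence "cyclic_group (subgroup_generated G {x, y})" using cyclic_group_generated by simp
  thus "y \<noteq> x \<longrightarrow> cyc_adj G x y" using x1 y1 assms(5) by (auto simp: cyc_adj_def)
qed

end
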